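(* Assume all deadlines are positive integers. For $\bar d\in\mathcal D$, an integer $q$ with $2\le q\le\bar d$, and $i\in\{0,\dots,q-1\}$, let $\mathcal K(\bar d,i,q)=\{k\in\mathcal K:\bar d_k\le\bar d,\ i\,\bar d/q<t_k\le(i+1)\,\bar d/q\}$. Then for every feasible solution $(\rho_{kp})$ of $B(\mathcal K)$, the vector $\rho_k=\sum_{p\in\mathcal P}\rho_{kp}$ satisfies $$\sum_{i=1}^{q-1}\sum_{k\in\mathcal K(\bar d,i,q)} i\,\rho_k\le (q-1)\,|\mathcal P|.$$
   Context: Let $\mathcal O$ be a finite set of orders, each order $o\in\mathcal O$ having a deadline $\bar d_o>0$; let $\mathcal D=\{\bar d_o: o\in\mathcal O\}$ be the set of distinct deadlines and let $\mathcal P$ be a finite nonempty set of pickers. Let $\mathcal K$ be a finite set of routes; each route $k\in\mathcal K$ has a nonempty batch of orders $\mathcal O_k\subseteq\mathcal O$ and a duration $t_k>0$, and its deadline is $\bar d_k=\min_{o\in\mathcal O_k}\bar d_o$. Write $\mathcal K(o)=\{k\in\mathcal K: o\in\mathcal O_k\}$ and $\mathcal K(\bar d)=\{k\in\mathcal K:\bar d_k\le\bar d\}$. Formulation $B(\mathcal K)$: binary variables $\rho_{kp}\in\{0,1\}$ ($k\in\mathcal K,p\in\mathcal P$); minimize $\sum_{k\in\mathcal K}t_k\sum_{p\in\mathcal P}\rho_{kp}$ subject to $\sum_{k\in\mathcal K(o)}\sum_{p\in\mathcal P}\rho_{kp}\ge 1$ for all $o\in\mathcal O$, and $\sum_{k\in\mathcal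 K(\bar d)}t_k\rho_{kp}\le\bar d$ for all $\bar d\in\mathcal D$, $p\in\mathcal P$. *)

theory Defs
  imports Complex_Main
begin

text \<open>Orders have type 'o with deadline dl o (a positive integer, modelled as nat);
 routes have type 'k with batch Ob k and duration t k; pickers have type 'p.\<close>

definition route_deadline :: "('o \<Rightarrow> nat) \<Rightarrow> ('k \<Rightarrow> 'o set) \<Rightarrow> 'k \<Rightarrow> nat" where
  "route_deadline dl Ob k = Min (dl ` Ob k)"

definition deadlines :: "'o set \<Rightarrow> ('o \<Rightarrow> nat) \<Rightarrow> nat set" where
  "deadlines Ords dl = dl ` Ords"

definition feasible_B ::
  "'o set \<Rightarrow> ('o \<Rightarrow> nat) \<Rightarrow> 'p set \<Rightarrow> 'k set \<Rightarrow> ('k \<Rightarrow> 'o set) \<Rightarrow> ('k \<Rightarrow> real)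
   \<Rightarrow> ('k \<Rightarrow> 'p \<Rightarrow> nat) \<Rightarrow> bool" where
  "feasible_B Ords dl P K Ob t rho \<longleftrightarrow>
     (\<forall>k\<in>K. \<forall>p\<in>P. rho k p \<in> {0, 1}) \<and>
     (\<forall>x\<in>Ords. (\<Sum>k\<in>{k\<in>K. x \<in> Ob k}. \<Sum>p\<in>P. rho k p) \<ge> 1) \<and>
     (\<forall>d\<in>deadlines Ords dl. \<forall>p\<in>P.
        (\<Sum>k\<in>{k\<in>K. route_deadline dl Ob k \<le> d}. t k * real (rho k p)) \<le> real d)"

definition K_class ::
  "'k set \<Rightarrow> ('o \<Rightarrow> nat) \<Rightarrow> ('k \<Rightarrow> 'o set) \<Rightarrow> ('k \<Rightarrow> real) \<Rightarrow> nat \<Rightarrow> nat \<Rightarrow> nat \<Rightarrow> 'k set" where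
  "K_class K dl Ob t d i q =
     {k\<in>K. route_deadline dl Ob k \<le> d \<and>
            real i * real d / real q < t k \<and> t k \<le> real (i + 1) * real d / real q}"

end

theory Submission
  imports Defs
begin

theorem proposition5:
  fixes Ords :: "'o set" and dl :: "'o \<Rightarrow> nat" and P :: "'p set"
    and K :: "'k set" and Ob :: "'k \<Rightarrow> 'o set" and t :: "'k \<Rightarrow> real"
    and rho :: "'k \<Rightarrow> 'p \<Rightarrow> nat" and d q :: nat
  assumes "finite Ords" and "\<forall>x\<in>Ords. dl x > 0"
    and "finite P" and "P \<noteq> {}"
    and "finite K" and "\<forall>k\<in>K. Ob k \<noteq> {} \<and> Ob k \<subseteq> Ords \<and> t k > 0"
    and "feasible_B Ords dl P K Ob t rho"
    and "d \<in> deadlines Ords dl" and "2 \<le> q" and "q \<le> d"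
  shows "(\<Sum>i=1..q-1. \<Sum>k\<in>K_class K dl Ob t d i q. i * (\<Sum>p\<in>P. rho k p))
           \<le> (q - 1) * card P"
proof -
  define C where "C i = K_class K dl Ob t d i q" for i
  have finC: "finite (C i)" for i using assms(5) by (simp add: C_def K_class_def)
  have CK: "C i \<subseteq> {k\<in>K. route_deadline dl Ob k \<le> d}" for i by (auto simp: C_def K_class_def)
  have dpos: "real d > 0" "real q > 0" using assms(9,10) by auto
  have tlow: "real i * real d / real q < t k" if "k \<in> C i" for i k using that by (simp add: C_def K_class_def)
  have tup: "t k \<le> real (i+1) * real d / real q" if "k \<in> C i" for i k using that by (simp add: C_def K_class_def)
  have disj: "C i \<inter> C j = {}" if "i \<noteq> j" for i j
  proof (rule ccontr)
    assume "C i \<inter> C j \<noteq> {}"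
    then obtain k where k: "k \<in> C i" "k \<in> C j" by auto
    { fix a b assume ab: "a < b" "k \<in> C a" "k \<in> C b"
      have "real (a+1) \<le> real b" using ab by simp
      hence "real (a+1) * real d / real q \<le> real b * real d / real q"
        using dpos by (simp add: divide_right_mono mult_right_mono)
      with tup[OF ab(2)] tlow[OF ab(3)] have False by linarith }
    with k that show False by (metis linorder_neq_iff)
  qed
  have rho01: "rho k p \<in> {0,1}" if "k \<in> K" "p \<in> P" for k p
    using assms(7) that by (simp add: feasible_B_def)
  have cap: "(\<Sum>k\<in>{k\<in>K. route_deadline dl Ob k \<le> d}. t k * real (rho k p)) \<le> real d"
    if "p \<in> P" for p using assms(7,8) that by (simp add: feasible_B_def)
  have tpos: "t k > 0" if "k \<in> K" for k using assms(6) that by auto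
  define S where "S p = (\<Sum>i=1..q-1. \<Sum>k\<in>C i. i * rho k p)" for p
  have Sbound: "S p \<le> q - 1" if p: "p \<in> P" for p
  proof (cases "S p = 0")
    case True then show ?thesis by simp
  next
    case False
    define A where "A = Sigma {1..q-1} C"
    have finA: "finite A" using finC by (simp add: A_def)
    have S_eq: "real (S p) = (\<Sum>(i,k)\<in>A. real i * real (rho k p))"
      unfolding S_def A_def by (simp add: sum.Sigma[symmetric] finC)
    have le: "real i * real (rho k p) \<le> real q / real d * (t k * real (rho k p))"
      if "(i,k) \<in> A" for i k
    proof -
      have kK: "k \<in> K" "k \<in> C i" using that CK unfolding A_def by auto
      have "real i < real q / real d * t k"
        using tlow[OF kK(2)] dpos by (simp add: field_simps)
      then show ?thesis using rho01[OF kK(1) p]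
        by auto
    qed
    obtain i k where ik: "(i,k) \<in> A" "rho k p \<noteq> 0" "i \<noteq> 0"
    proof -
      obtain i where i: "i \<in> {1..q-1}" "(\<Sum>k\<in>C i. i * rho k p) \<noteq> 0"
        using False unfolding S_def by (meson sum.not_neutral_contains_not_neutral)
      then obtain k where k: "k \<in> C i" "i * rho k p \<noteq> 0"
        by (meson sum.not_neutral_contains_not_neutral)
      show ?thesis using that[of i k] i k unfolding A_def by auto
    qed
    have lt: "real i * real (rho k p) < real q / real d * (t k * real (rho k p))"
    proof -
      have kK: "k \<in> K" "k \<in> C i" using ik CK unfolding A_def by auto
      have "real i < real q / real d * t k"
        using tlow[OF kK(2)] dpos by (simp add: field_simps)
      then show ?thesis using rho01[OF kK(1) p] ik(2) by auto
    qed
    have T1: "real (S p) < (\<Sum>(i,k)\<in>A. real q / real d * (t k * real (rho k p)))"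
      unfolding S_eq
    proof (rule sum_strict_mono_ex1[OF finA])
      show "\<forall>x\<in>A. (case x of (i, k) \<Rightarrow> real i * real (rho k p)) \<le> (case x of (i, k) \<Rightarrow> real q / real d * (t k * real (rho k p)))"
        using le by (auto split: prod.splits)
      show "\<exists>x\<in>A. (case x of (i, k) \<Rightarrow> real i * real (rho k p)) < (case x of (i, k) \<Rightarrow> real q / real d * (t k * real (rho k p)))"
        using ik(1) lt by (intro bexI[of _ "(i,k)"]) auto
    qed
    have T2: "(\<Sum>(i,k)\<in>A. real q / real d * (t k * real (rho k p))) = real q / real d * (\<Sum>i=1..q-1. \<Sum>k\<in>C i. t k * real (rho k p))"
      unfolding A_def by (simp add: sum.Sigma[symmetric] finC sum_distrib_left)
    have T3: "(\<Sum>i=1..q-1. \<Sum>k\<in>C i. t k * real (rho k p)) = (\<Sum>k\<in>(\<Union>i\<in>{1..q-1}. C i). t k * real (rho k p))"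
      by (rule sum.UNION_disjoint[symmetric]) (auto simp: finC dest: disj)
    have T4: "(\<Sum>k\<in>(\<Union>i\<in>{1..q-1}. C i). t k * real (rho k p)) \<le> (\<Sum>k\<in>{k\<in>K. route_deadline dl Ob k \<le> d}. t k * real (rho k p))"
    proof (rule sum_mono2)
      show "finite {k \<in> K. route_deadline dl Ob k \<le> d}" using assms(5) by simp
      show "(\<Union>i\<in>{1..q-1}. C i) \<subseteq> {k \<in> K. route_deadline dl Ob k \<le> d}" using CK by blast
      fix k assume "k \<in> {k \<in> K. route_deadline dl Ob k \<le> d} - (\<Union>i\<in>{1..q-1}. C i)"
      hence "k \<in> K" by blast
      thus "0 \<le> t k * real (rho k p)" using tpos[of k] by simp
    qed
    have "(\<Sum>i=1..q-1. \<Sum>k\<in>C i. t k * real (rho k p)) \<le> real d" using T3 T4 cap[OF p] by linarith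
    hence "real q / real d * (\<Sum>i=1..q-1. \<Sum>k\<in>C i. t k * real (rho k p)) \<le> real q / real d * real d"
      using dpos by (intro mult_left_mono) auto
    hence "real (S p) < real q" using T1 T2 dpos by simp
    thus ?thesis by linarith
  qed
  have "(\<Sum>i=1..q-1. \<Sum>k\<in>C i. i * (\<Sum>p\<in>P. rho k p)) = (\<Sum>p\<in>P. S p)"
    unfolding S_def by (simp add: sum_distrib_left sum.swap[of _ P])
  also have "\<dots> \<le> (\<Sum>p\<in>P. q - 1)" by (rule sum_mono) (use Sbound in auto)
  also have "\<dots> = (q - 1) * card P" by simp
  finally show ?thesis unfolding C_def .
qed

end
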